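(* Let $X$ be a reflexive complex Banach space and let $a$ be a positive, densely defined linear operator from $X$ to $X^\ast$ with positive lower bound, i.e. $(ax,x)\ge\gamma\|x\|^2$ for all $x\in\operatorname{dom}a$, for some $\gamma>0$. Then $a$ admits a positive self-adjoint extension $A$ from $X$ to $X^\ast$ with the same lower bound, i.e. $(Ax,x)\ge\gamma\|x\|^2$ for all $x\in\operatorname{dom}A$.
   Context: $X^\ast$ denotes the conjugate dual of $X$: the space of all continuous conjugate-linear functionals on $X$; $X$ is identified with $X^{\ast\ast}$. For $v\in X^\ast$, $x\in X$ write $(v,x):=v(x)$ and $(x,v):=\overline{v(x)}$. For a densely defined linear operator $A$ from $X$ to $X^\ast$: $A$ is positive if $(Ax,x)\ge 0$ for all $x\in\operatorname{dom}A$; the adjoint $A^\ast$ is the operator from $X$ to $X^\ast$ with $\operatorname{dom}A^\ast=\{y\in X: x\mapsto (Ax,y)\text{ is continuous on }\operatorname{dom}A\}$ and $A^\ast y\in X^\ast$ determined by $(x,A^\ast y)=(Ax,y)$ for all $x\in\operatorname{dom}A$; $A$ is self-adjoint if $A=A^\ast$. *)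

theory Defs
  imports "HOL-Analysis.Analysis"
begin

text \<open>A complex Banach space is modelled as a real Banach space type 'a together with a
  complex scalar multiplication sc extending the real one and compatible with the norm.\<close>

definition complex_scaling :: "(complex \<Rightarrow> 'a::real_normed_vector \<Rightarrow> 'a) \<Rightarrow> bool" where
  "complex_scaling sc \<longleftrightarrow>
     (\<forall>r x. sc (complex_of_real r) x = r *\<^sub>R x) \<and>
     (\<forall>c d x. sc (c + d) x = sc c x + sc d x) \<and>
     (\<forall>c x y. sc c (x + y) = sc c x + sc c y) \<and>
     (\<forall>c d x. sc (c * d) x = sc c (sc d x)) \<and>
     (\<forall>c x. norm (sc c x) = cmod c * norm x)"

definition conj_linear :: "(complex \<Rightarrow> 'a \<Rightarrow> 'a) \<Rightarrow> ('a::real_normed_vector \<Rightarrow> complex) \<Rightarrow> bool" where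
  "conj_linear sc v \<longleftrightarrow> (\<forall>x y. v (x + y) = v x + v y) \<and> (\<forall>c x. v (sc c x) = cnj c * v x)"

definition cdual :: "(complex \<Rightarrow> 'a \<Rightarrow> 'a) \<Rightarrow> ('a::real_normed_vector \<Rightarrow> complex) set" where
  "cdual sc = {v. conj_linear sc v \<and> (\<exists>K. \<forall>x. cmod (v x) \<le> K * norm x)}"

text \<open>Reflexivity: every continuous conjugate-linear functional Phi on X* (with its operator
  norm) is given by some x in X via Phi v = (x, v) = conj (v x).\<close>

definition reflexive_space :: "(complex \<Rightarrow> 'a \<Rightarrow> 'a) \<Rightarrow> 'a::real_normed_vector itself \<Rightarrow> bool" where
  "reflexive_space sc _ \<longleftrightarrow>
     (\<forall>\<Phi> :: ('a \<Rightarrow> complex) \<Rightarrow> complex.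
        (\<forall>v\<in>cdual sc. \<forall>w\<in>cdual sc. \<Phi> (\<lambda>x. v x + w x) = \<Phi> v + \<Phi> w) \<and>
        (\<forall>v\<in>cdual sc. \<forall>c. \<Phi> (\<lambda>x. c * v x) = cnj c * \<Phi> v) \<and>
        (\<exists>C. \<forall>v\<in>cdual sc. cmod (\<Phi> v) \<le> C * onorm v)
      \<longrightarrow> (\<exists>x. \<forall>v\<in>cdual sc. \<Phi> v = cnj (v x)))"

text \<open>A linear operator from X to X* with domain D (a complex subspace); values outside D
  are irrelevant.  (A x, y) is written A x y.\<close>

definition dual_operator :: "(complex \<Rightarrow> 'a \<Rightarrow> 'a) \<Rightarrow> 'a set \<Rightarrow> ('a::real_normed_vector \<Rightarrow> 'a \<Rightarrow> complex) \<Rightarrow> bool" where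
  "dual_operator sc D A \<longleftrightarrow>
     0 \<in> D \<and> (\<forall>x\<in>D. \<forall>y\<in>D. x + y \<in> D) \<and> (\<forall>c. \<forall>x\<in>D. sc c x \<in> D) \<and>
     (\<forall>x\<in>D. \<forall>y\<in>D. A (x + y) = (\<lambda>z. A x z + A y z)) \<and>
     (\<forall>c. \<forall>x\<in>D. A (sc c x) = (\<lambda>z. c * A x z)) \<and>
     (\<forall>x\<in>D. A x \<in> cdual sc)"

definition densely_defined :: "'a::real_normed_vector set \<Rightarrow> bool" where
  "densely_defined D \<longleftrightarrow> closure D = UNIV"

definition positive_op :: "'a set \<Rightarrow> ('a \<Rightarrow> 'a \<Rightarrow> complex) \<Rightarrow> bool" where
  "positive_op D A \<longleftrightarrow> (\<forall>x\<in>D. Im (A x x) = 0 \<and> Re (A x x) \<ge> 0)"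

definition lower_bound :: "'a::real_normed_vector set \<Rightarrow> ('a \<Rightarrow> 'a \<Rightarrow> complex) \<Rightarrow> real \<Rightarrow> bool" where
  "lower_bound D A \<gamma> \<longleftrightarrow> (\<forall>x\<in>D. Im (A x x) = 0 \<and> Re (A x x) \<ge> \<gamma> * (norm x)\<^sup>2)"

text \<open>Adjoint: dom A* = {y. x \<mapsto> (A x, y) is continuous on dom A}, and A* y is the element of
  X* with (x, A* y) = conj (A* y x) = (A x, y) for x in dom A (unique by density).\<close>

definition adj_dom :: "'a::real_normed_vector set \<Rightarrow> ('a \<Rightarrow> 'a \<Rightarrow> complex) \<Rightarrow> 'a set" where
  "adj_dom D A = {y. \<exists>K. \<forall>x\<in>D. cmod (A x y) \<le> K * norm x}"

definition is_adjoint_value :: "(complex \<Rightarrow> 'a \<Rightarrow> 'a) \<Rightarrow> 'a set \<Rightarrow> ('a::real_normed_vector \<Rightarrow> 'a \<Rightarrow> complex) \<Rightarrow> 'a \<Rightarrow> ('a \<Rightarrow> complex) \<Rightarrow> bool" where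
  "is_adjoint_value sc D A y w \<longleftrightarrow> w \<in> cdual sc \<and> (\<forall>x\<in>D. cnj (w x) = A x y)"

definition self_adjoint :: "(complex \<Rightarrow> 'a \<Rightarrow> 'a) \<Rightarrow> 'a set \<Rightarrow> ('a::real_normed_vector \<Rightarrow> 'a \<Rightarrow> complex) \<Rightarrow> bool" where
  "self_adjoint sc D A \<longleftrightarrow> adj_dom D A = D \<and> (\<forall>y\<in>D. is_adjoint_value sc D A y (A y))"

end

theory Submission
  imports Defs
begin


definition rsub :: "('a::real_normed_vector \<times> real) set \<Rightarrow> bool" where
  "rsub G \<longleftrightarrow> (0,0) \<in> G \<and> (\<forall>x r y s. (x,r)\<in>G \<longrightarrow> (y,s)\<in>G \<longrightarrow> (x+y, r+s) \<in> G) \<and>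
     (\<forall>x r c. (x,r)\<in>G \<longrightarrow> (c *\<^sub>R x, c*r) \<in> G)"

definition rbnd :: "real \<Rightarrow> ('a::real_normed_vector \<times> real) set \<Rightarrow> bool" where
  "rbnd K G \<longleftrightarrow> (\<forall>x r. (x,r)\<in>G \<longrightarrow> r \<le> K * norm x)"

lemma rsub_fun:
  assumes "rsub G" "rbnd K G" "(x,r)\<in>G" "(x,s)\<in>G"
  shows "r = s"
proof -
  have "(x + (-1) *\<^sub>R x, r + (-1) * s) \<in> G" using assms unfolding rsub_def by blast
  hence "r - s \<le> 0" using assms(2) unfolding rbnd_def by fastforce
  moreover have "(x + (-1) *\<^sub>R x, s + (-1) * r) \<in> G" using assms unfolding rsub_def by blast
  hence "s - r \<le> 0" using assms(2) unfolding rbnd_def by fastforce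
  ultimately show ?thesis by simp
qed

lemma rsub_extend:
  assumes M: "rsub M" "rbnd K M" and K: "K \<ge> 0" and x0: "\<forall>r. (x0, r) \<notin> M"
  shows "\<exists>M'. rsub M' \<and> rbnd K M' \<and> M \<subseteq> M' \<and> M' \<noteq> M"
proof -
  define L where "L = {r - K * norm (y - x0) | y r. (y,r)\<in>M}"
  define c where "c = Sup L"
  have z: "(0,0) \<in> M" using M unfolding rsub_def by blast
  have key: "r - K * norm (y - x0) \<le> K * norm (z + x0) - s" if "(y,r)\<in>M" "(z,s)\<in>M" for y r z s
  proof -
    have "(y+z, r+s) \<in> M" using M that unfolding rsub_def by blast
    hence "r + s \<le> K * norm (y + z)" using M unfolding rbnd_def by blast
    also have "norm (y + z) \<le> norm (y - x0) + norm (z + x0)"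
      using norm_triangle_ineq[of "y - x0" "z + x0"] by simp
    hence "K * norm (y + z) \<le> K * (norm (y - x0) + norm (z + x0))" using K by (rule mult_left_mono)
    finally show ?thesis by (simp add: algebra_simps)
  qed
  have Lne: "L \<noteq> {}" using z unfolding L_def by blast
  have up: "l \<le> c" if "l \<in> L" for l
    unfolding c_def
  proof (rule cSup_upper[OF that])
    show "bdd_above L" unfolding bdd_above_def L_def using key[OF _ z] by auto
  qed
  have lo: "c \<le> K * norm (z + x0) - s" if "(z,s)\<in>M" for z s
    unfolding c_def using Lne key[OF _ that] unfolding L_def by (auto intro!: cSup_least)
  define M' where "M' = {(y + t *\<^sub>R x0, r + t*c) | y r t. (y,r)\<in>M}"
  have "rsub M'"
    unfolding rsub_def
  proof (intro conjI allI impI)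
    show "(0,0) \<in> M'" unfolding M'_def using z by force
  next
    fix x r y s assume "(x,r)\<in>M'" "(y,s)\<in>M'"
    then obtain x1 r1 t1 x2 r2 t2 where h: "(x1,r1)\<in>M" "(x2,r2)\<in>M" "x = x1 + t1 *\<^sub>R x0" "r = r1 + t1*c"
      "y = x2 + t2 *\<^sub>R x0" "s = r2 + t2*c" unfolding M'_def by blast
    have "(x1+x2, r1+r2)\<in>M" using M h unfolding rsub_def by blast
    moreover have "x + y = (x1+x2) + (t1+t2) *\<^sub>R x0" "r + s = (r1+r2) + (t1+t2)*c"
      using h by (auto simp: algebra_simps)
    ultimately show "(x+y, r+s) \<in> M'" unfolding M'_def by blast
  next
    fix x r d assume "(x,r)\<in>M'"
    then obtain x1 r1 t1 where h: "(x1,r1)\<in>M" "x = x1 + t1 *\<^sub>R x0" "r = r1 + t1*c"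
      unfolding M'_def by blast
    have "(d *\<^sub>R x1, d*r1)\<in>M" using M h unfolding rsub_def by blast
    moreover have "d *\<^sub>R x = d *\<^sub>R x1 + (d*t1) *\<^sub>R x0" "d * r = d*r1 + (d*t1)*c"
      using h by (auto simp: algebra_simps)
    ultimately show "(d *\<^sub>R x, d*r) \<in> M'" unfolding M'_def by blast
  qed
  moreover have "rbnd K M'"
    unfolding rbnd_def
  proof (intro allI impI)
    fix x r assume "(x,r)\<in>M'"
    then obtain y s t where h: "(y,s)\<in>M" "x = y + t *\<^sub>R x0" "r = s + t*c"
      unfolding M'_def by blast
    consider "t = 0" | "t > 0" | "t < 0" by linarith
    then show "r \<le> K * norm x"
    proof cases
      case 1 then show ?thesis using h M unfolding rbnd_def by auto
    next
      case 2
      have "((1/t) *\<^sub>R y, (1/t) * s) \<in> M" using M h unfolding rsub_def by blast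
      from lo[OF this] have "t * c \<le> t * (K * norm ((1/t) *\<^sub>R y + x0) - (1/t) * s)"
        using 2 by (simp add: mult_left_mono)
      also have "t * (K * norm ((1/t) *\<^sub>R y + x0) - (1/t) * s) = K * (t * norm ((1/t) *\<^sub>R y + x0)) - s"
        using 2 by (simp add: algebra_simps)
      also have "t * norm ((1/t) *\<^sub>R y + x0) = norm (t *\<^sub>R ((1/t) *\<^sub>R y + x0))" using 2 by simp
      also have "t *\<^sub>R ((1/t) *\<^sub>R y + x0) = x" using 2 h by (simp add: algebra_simps)
      finally show ?thesis using h by simp
    next
      case 3
      define u where "u = - t"
      have u: "u > 0" using 3 u_def by simp
      have "((1/u) *\<^sub>R y, (1/u) * s) \<in> M" using M h unfolding rsub_def by blast
      from up[of "(1/u) * s - K * norm ((1/u) *\<^sub>R y - x0)"] this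
      have "(1/u) * s - K * norm ((1/u) *\<^sub>R y - x0) \<le> c" unfolding L_def by blast
      hence "u * ((1/u) * s - K * norm ((1/u) *\<^sub>R y - x0)) \<le> u * c"
        using u by (simp add: mult_left_mono)
      also have "u * ((1/u) * s - K * norm ((1/u) *\<^sub>R y - x0)) = s - K * (u * norm ((1/u) *\<^sub>R y - x0))"
        using u by (simp add: algebra_simps)
      also have "u * norm ((1/u) *\<^sub>R y - x0) = norm (u *\<^sub>R ((1/u) *\<^sub>R y - x0))" using u by simp
      also have "u *\<^sub>R ((1/u) *\<^sub>R y - x0) = x" using u h u_def by (simp add: algebra_simps)
      finally show ?thesis using h u_def by (simp add: algebra_simps)
    qed
  qed
  moreover have "M \<subseteq> M'"
  proof
    fix p assume "p \<in> M"
    then obtain y r where "p = (y,r)" "(y,r)\<in>M" by (cases p) auto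
    then show "p \<in> M'" unfolding M'_def by (rule_tac CollectI, rule_tac exI[of _ y], rule_tac exI[of _ r], rule_tac exI[of _ 0]) simp
  qed
  moreover have "(x0, c) \<in> M'" unfolding M'_def using z by (rule_tac CollectI, rule_tac exI[of _ 0], rule_tac exI[of _ 0], rule_tac exI[of _ 1]) simp
  hence "M' \<noteq> M" using x0 by blast
  ultimately show ?thesis by blast
qed

lemma hb_real:
  fixes G0 :: "('a::real_normed_vector \<times> real) set"
  assumes G0: "rsub G0" "rbnd K G0" and K: "K \<ge> 0"
  shows "\<exists>\<phi>. (\<forall>x y. \<phi> (x+y) = \<phi> x + \<phi> y) \<and> (\<forall>c x. \<phi> (c *\<^sub>R x) = c * \<phi> x) \<and>
             (\<forall>x r. (x,r)\<in>G0 \<longrightarrow> \<phi> x = r) \<and> (\<forall>x. \<phi> x \<le> K * norm x)"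
proof -
  define F where "F = {G. rsub G \<and> rbnd K G \<and> G0 \<subseteq> G}"
  have "\<forall>C\<in>chains F. \<exists>U\<in>F. \<forall>X\<in>C. X \<subseteq> U"
  proof
    fix C assume C: "C \<in> chains F"
    show "\<exists>U\<in>F. \<forall>X\<in>C. X \<subseteq> U"
    proof (cases "C = {}")
      case True then show ?thesis using G0 unfolding F_def by blast
    next
      case False
      have CF: "C \<subseteq> F" and ch: "\<forall>A\<in>C. \<forall>B\<in>C. A \<subseteq> B \<or> B \<subseteq> A"
        using C unfolding chains_def chain_subset_def by auto
      have "rsub (\<Union>C)" unfolding rsub_def
      proof (intro conjI allI impI)
        show "(0,0) \<in> \<Union>C" using False CF unfolding F_def rsub_def by blast
      next
        fix x r y s assume a: "(x,r)\<in>\<Union>C" "(y,s)\<in>\<Union>C"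
        then obtain A B where AB: "A\<in>C" "B\<in>C" "(x,r)\<in>A" "(y,s)\<in>B" by blast
        from ch AB(1,2) have "A \<subseteq> B \<or> B \<subseteq> A" by blast
        then show "(x+y,r+s)\<in>\<Union>C"
        proof
          assume "A \<subseteq> B" then show ?thesis using AB CF unfolding F_def rsub_def by blast
        next
          assume "B \<subseteq> A" then show ?thesis using AB CF unfolding F_def rsub_def by blast
        qed
      next
        fix x r c assume "(x,r)\<in>\<Union>C"
        then show "(c *\<^sub>R x, c*r) \<in> \<Union>C" using CF unfolding F_def rsub_def by blast
      qed
      moreover have "rbnd K (\<Union>C)" using CF unfolding F_def rbnd_def by blast
      moreover have "G0 \<subseteq> \<Union>C" using CF False unfolding F_def by blast
      ultimately show ?thesis unfolding F_def by blast
    qed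
  qed
  from Zorn_Lemma2[OF this] obtain M where M: "M \<in> F" "\<forall>X\<in>F. M \<subseteq> X \<longrightarrow> X = M" by blast
  have Ms: "rsub M" "rbnd K M" "G0 \<subseteq> M" using M unfolding F_def by auto
  have tot: "\<exists>r. (x,r)\<in>M" for x
  proof (rule ccontr)
    assume "\<not> ?thesis"
    then obtain M' where "rsub M'" "rbnd K M'" "M \<subseteq> M'" "M' \<noteq> M"
      using rsub_extend[OF Ms(1,2) K] by blast
    then show False using M Ms unfolding F_def by blast
  qed
  define \<phi> where "\<phi> x = (SOME r. (x,r)\<in>M)" for x
  have phi: "(x, \<phi> x) \<in> M" for x unfolding \<phi>_def using tot by (rule someI_ex)
  have eq: "\<phi> x = r" if "(x,r)\<in>M" for x r using rsub_fun[OF Ms(1,2) phi that] .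
  show ?thesis
  proof (intro exI conjI allI impI)
    fix x y show "\<phi> (x+y) = \<phi> x + \<phi> y" using eq phi Ms(1) unfolding rsub_def by blast
  next
    fix c x show "\<phi> (c *\<^sub>R x) = c * \<phi> x" using eq phi Ms(1) unfolding rsub_def by blast
  next
    fix x r assume "(x,r)\<in>G0" then show "\<phi> x = r" using eq Ms(3) by blast
  next
    fix x show "\<phi> x \<le> K * norm x" using phi Ms(2) unfolding rbnd_def by blast
  qed
qed




locale csc =
  fixes sc :: "complex \<Rightarrow> 'a::real_normed_vector \<Rightarrow> 'a"
  assumes cs: "complex_scaling sc"
begin

lemma sc_real: "sc (complex_of_real r) x = r *\<^sub>R x" using cs unfolding complex_scaling_def by blast
lemma sc_add_l: "sc (c + d) x = sc c x + sc d x" using cs unfolding complex_scaling_def by blast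
lemma sc_add_r: "sc c (x + y) = sc c x + sc c y" using cs unfolding complex_scaling_def by blast
lemma sc_mult: "sc (c * d) x = sc c (sc d x)" using cs unfolding complex_scaling_def by blast
lemma sc_norm: "norm (sc c x) = cmod c * norm x" using cs unfolding complex_scaling_def by blast
lemma sc_zero_r[simp]: "sc c 0 = 0" using sc_add_r[of c 0 0] by simp
lemma sc_minus_r: "sc c (- x) = - sc c x" using sc_add_r[of c x "-x"] by (simp add: add_eq_0_iff)
lemma sc_diff_r: "sc c (x - y) = sc c x - sc c y" using sc_add_r[of c x "-y"] sc_minus_r[of c y] by simp
lemma sc_one[simp]: "sc 1 x = x" using sc_real[of 1 x] by simp
lemma sc_scaleR: "sc c (r *\<^sub>R x) = r *\<^sub>R sc c x"
  using sc_mult[of c "complex_of_real r" x] sc_mult[of "complex_of_real r" c x] sc_real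
  by (simp add: mult.commute)
lemma sc_ii: "sc \<i> (sc \<i> x) = - x"
  using sc_mult[of \<i> \<i> x] sc_real[of "-1" x] by simp
lemma sc_split: "sc c x = Re c *\<^sub>R x + Im c *\<^sub>R sc \<i> x"
proof -
  have e: "complex_of_real (Re c) + complex_of_real (Im c) * \<i> = c" by (simp add: complex_eq_iff)
  have "sc c x = sc (complex_of_real (Re c) + complex_of_real (Im c) * \<i>) x" by (simp only: e)
  also have "\<dots> = sc (complex_of_real (Re c)) x + sc (complex_of_real (Im c)) (sc \<i> x)"
    by (simp only: sc_add_l sc_mult)
  finally have "sc c x = sc (complex_of_real (Re c)) x + sc (complex_of_real (Im c)) (sc \<i> x)" .
  then show ?thesis by (simp add: sc_real)
qed

lemma cdualD:
  assumes "f \<in> cdual sc"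
  shows "f (x + y) = f x + f y" "f (sc c x) = cnj c * f x"
  using assms unfolding cdual_def conj_linear_def by auto

lemma cdual_bound:
  assumes "f \<in> cdual sc"
  obtains K where "K \<ge> 0" "\<And>x. cmod (f x) \<le> K * norm x"
proof -
  obtain K where K: "\<And>x. cmod (f x) \<le> K * norm x" using assms unfolding cdual_def by blast
  have "cmod (f x) \<le> max K 0 * norm x" for x
  proof -
    have "K * norm x \<le> max K 0 * norm x" by (rule mult_right_mono) auto
    then show ?thesis using K[of x] by linarith
  qed
  then show ?thesis using that[of "max K 0"] by simp
qed

lemma cdual_zero[simp]: "f \<in> cdual sc \<Longrightarrow> f 0 = 0"
  using cdualD(1)[of f 0 0] by simp
lemma cdual_minus: "f \<in> cdual sc \<Longrightarrow> f (- x) = - f x"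
  using cdualD(1)[of f x "-x"] by (simp add: add_eq_0_iff)
lemma cdual_diff: "f \<in> cdual sc \<Longrightarrow> f (x - y) = f x - f y"
  using cdualD(1)[of f x "-y"] cdual_minus[of f y] by simp
lemma cdual_scaleR: "f \<in> cdual sc \<Longrightarrow> f (r *\<^sub>R x) = complex_of_real r * f x"
  using cdualD(2)[of f "complex_of_real r" x] sc_real by simp

lemma cdual_tendsto:
  assumes f: "f \<in> cdual sc" and X: "X \<longlonglongrightarrow> x"
  shows "(\<lambda>n. f (X n)) \<longlonglongrightarrow> f x"
proof -
  obtain K where K: "K \<ge> 0" "\<And>x. cmod (f x) \<le> K * norm x" using cdual_bound[OF f] by blast
  have X0: "(\<lambda>n. X n - x) \<longlonglongrightarrow> 0" using X by (simp add: LIM_zero)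
  have T: "(\<lambda>n. K * norm (X n - x)) \<longlonglongrightarrow> 0"
    using tendsto_mult[OF tendsto_const[of K] tendsto_norm_zero[OF X0]] by simp
  have "norm (f (X n) - f x) \<le> K * norm (X n - x)" for n
    using K(2)[of "X n - x"] cdual_diff[OF f] by simp
  then have E: "eventually (\<lambda>n. norm (f (X n) - f x) \<le> K * norm (X n - x)) sequentially"
    by (simp add: always_eventually)
  have "(\<lambda>n. f (X n) - f x) \<longlonglongrightarrow> 0"
    by (rule Lim_null_comparison[OF E T])
  then show ?thesis by (simp add: LIM_zero_iff)
qed

lemma cdual_add: "f \<in> cdual sc \<Longrightarrow> g \<in> cdual sc \<Longrightarrow> (\<lambda>x. f x + g x) \<in> cdual sc"
proof -
  assume f: "f \<in> cdual sc" and g: "g \<in> cdual sc"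
  obtain K where K: "\<And>x. cmod (f x) \<le> K * norm x" using cdual_bound[OF f] by blast
  obtain L where L: "\<And>x. cmod (g x) \<le> L * norm x" using cdual_bound[OF g] by blast
  have "cmod (f x + g x) \<le> (K + L) * norm x" for x
    using norm_triangle_ineq[of "f x" "g x"] K[of x] L[of x] by (simp add: algebra_simps)
  then show ?thesis using cdualD[OF f] cdualD[OF g] unfolding cdual_def conj_linear_def mem_Collect_eq
    by (intro conjI allI exI[of _ "K+L"]) (auto simp: algebra_simps)
qed

lemma cdual_smult: "f \<in> cdual sc \<Longrightarrow> (\<lambda>x. c * f x) \<in> cdual sc"
proof -
  assume f: "f \<in> cdual sc"
  obtain K where K: "\<And>x. cmod (f x) \<le> K * norm x" using cdual_bound[OF f] by blast
  have "cmod (c * f x) \<le> (cmod c * K) * norm x" for x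
    using K[of x] by (simp add: norm_mult mult.assoc mult_left_mono)
  then show ?thesis using cdualD[OF f] unfolding cdual_def conj_linear_def mem_Collect_eq
    by (intro conjI allI exI[of _ "cmod c * K"]) (auto simp: algebra_simps)
qed

lemma complexify:
  assumes add: "\<And>x y. \<phi> (x+y) = \<phi> x + \<phi> y" and hom: "\<And>c x. \<phi> (c *\<^sub>R x) = c * \<phi> x"
    and bnd: "\<And>x. \<phi> x \<le> K * norm x"
    and g_def: "g = (\<lambda>x. complex_of_real (\<phi> x) + \<i> * complex_of_real (\<phi> (sc \<i> x)))"
  shows "g \<in> cdual sc" "\<And>x. Re (g x) = \<phi> x" "\<And>x. Im (g x) = \<phi> (sc \<i> x)"
proof -
  show re: "Re (g x) = \<phi> x" for x unfolding g_def by simp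
  show "Im (g x) = \<phi> (sc \<i> x)" for x unfolding g_def by simp
  have gadd: "g (x + y) = g x + g y" for x y unfolding g_def by (simp add: add sc_add_r distrib_left)
  have neg: "\<phi> (- x) = - \<phi> x" for x using hom[of "-1" x] by simp
  have gsc: "g (sc c x) = cnj c * g x" for c x
  proof -
    have e1: "\<phi> (sc c x) = Re c * \<phi> x + Im c * \<phi> (sc \<i> x)"
      by (subst sc_split[of c x]) (simp add: add hom)
    have h: "sc \<i> (sc c x) = Re c *\<^sub>R sc \<i> x + (- Im c) *\<^sub>R x"
      by (subst sc_split[of c x]) (simp add: sc_add_r sc_scaleR sc_ii)
    have "\<phi> (sc \<i> (sc c x)) = Re c * \<phi> (sc \<i> x) + (- Im c) * \<phi> x"
      unfolding h by (simp only: add hom)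
    then have e2: "\<phi> (sc \<i> (sc c x)) = Re c * \<phi> (sc \<i> x) - Im c * \<phi> x"
      by simp
    show ?thesis unfolding g_def complex_eq_iff by (simp add: e1 e2 algebra_simps)
  qed
  have "cmod (g x) \<le> K * norm x" for x
  proof (cases "g x = 0")
    case True
    have "\<phi> x \<le> K * norm x" "\<phi> (- x) \<le> K * norm (- x)" by (rule bnd)+
    then have "0 \<le> K * norm x" using neg[of x] by simp
    then show ?thesis using True by simp
  next
    case False
    define c where "c = g x / complex_of_real (cmod (g x))"
    have cm: "cmod c = 1" using False unfolding c_def by (simp add: norm_divide)
    have n0: "cmod (g x) \<noteq> 0" using False by simp
    have "g (sc c x) = cnj c * g x" by (rule gsc)
    also have "\<dots> = cnj (g x) * g x / complex_of_real (cmod (g x))" unfolding c_def by simp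
    also have "\<dots> = complex_of_real ((cmod (g x))\<^sup>2) / complex_of_real (cmod (g x))"
      by (subst mult.commute, subst complex_norm_square[symmetric]) simp
    also have "\<dots> = complex_of_real (cmod (g x))" using n0 by (simp add: power2_eq_square)
    finally have "Re (g (sc c x)) = cmod (g x)" by simp
    then have "cmod (g x) = \<phi> (sc c x)" using re[of "sc c x"] by simp
    also have "\<dots> \<le> K * norm (sc c x)" by (rule bnd)
    also have "\<dots> = K * norm x" using cm by (simp add: sc_norm)
    finally show ?thesis .
  qed
  then show "g \<in> cdual sc" unfolding cdual_def conj_linear_def using gadd gsc by blast
qed

lemma separation:
  assumes "u \<noteq> 0"
  shows "\<exists>h\<in>cdual sc. h u \<noteq> 0"
proof -
  define G0 where "G0 = {(t *\<^sub>R u, t * norm u) | t. True}"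
  have "rsub G0" unfolding rsub_def G0_def
  proof (intro conjI allI impI)
    show "(0,0) \<in> {(t *\<^sub>R u, t * norm u) | t. True}" by (rule CollectI, rule exI[of _ 0]) simp
  next
    fix x r y s assume "(x,r) \<in> {(t *\<^sub>R u, t * norm u) | t. True}" "(y,s) \<in> {(t *\<^sub>R u, t * norm u) | t. True}"
    then obtain t1 t2 where h: "x = t1 *\<^sub>R u" "r = t1 * norm u" "y = t2 *\<^sub>R u" "s = t2 * norm u" by blast
    have "x+y = (t1+t2) *\<^sub>R u" "r+s = (t1+t2) * norm u" using h by (simp_all add: algebra_simps)
    then show "(x+y, r+s) \<in> {(t *\<^sub>R u, t * norm u) | t. True}" by blast
  next
    fix x r c assume "(x,r) \<in> {(t *\<^sub>R u, t * norm u) | t. True}"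
    then obtain t1 where h: "x = t1 *\<^sub>R u" "r = t1 * norm u" by blast
    have "c *\<^sub>R x = (c*t1) *\<^sub>R u" "c*r = (c*t1) * norm u" using h by simp_all
    then show "(c *\<^sub>R x, c*r) \<in> {(t *\<^sub>R u, t * norm u) | t. True}" by blast
  qed
  moreover have "rbnd 1 G0" unfolding rbnd_def G0_def
  proof (intro allI impI)
    fix x r assume "(x,r) \<in> {(t *\<^sub>R u, t * norm u) | t. True}"
    then obtain t where h: "x = t *\<^sub>R u" "r = t * norm u" by blast
    have "t * norm u \<le> \<bar>t\<bar> * norm u" by (rule mult_right_mono) auto
    then show "r \<le> 1 * norm x" using h by simp
  qed
  ultimately have "\<exists>\<phi>. (\<forall>x y. \<phi> (x+y) = \<phi> x + \<phi> y) \<and> (\<forall>c x. \<phi> (c *\<^sub>R x) = c * \<phi> x) \<and>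
             (\<forall>x r. (x,r)\<in>G0 \<longrightarrow> \<phi> x = r) \<and> (\<forall>x. \<phi> x \<le> 1 * norm x)"
    by (rule hb_real) simp
  then obtain \<phi> where p0: "\<forall>x y. \<phi> (x+y) = \<phi> x + \<phi> y" "\<forall>c x. \<phi> (c *\<^sub>R x) = c * \<phi> x"
    "\<forall>x r. (x,r)\<in>G0 \<longrightarrow> \<phi> x = r" "\<forall>x. \<phi> x \<le> 1 * norm x" by blast
  have p: "\<And>x y. \<phi> (x+y) = \<phi> x + \<phi> y" "\<And>c x. \<phi> (c *\<^sub>R x) = c * \<phi> x"
    "\<And>x r. (x,r)\<in>G0 \<Longrightarrow> \<phi> x = r" "\<And>x. \<phi> x \<le> 1 * norm x" using p0 by blast+
  have "(u, norm u) \<in> G0" unfolding G0_def by (intro CollectI exI[of _ 1]) simp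
  then have pu: "\<phi> u = norm u" by (rule p(3))
  define g where "g = (\<lambda>x. complex_of_real (\<phi> x) + \<i> * complex_of_real (\<phi> (sc \<i> x)))"
  note cx = complexify[OF p(1,2,4) g_def]
  have "Re (g u) \<noteq> 0" using cx(2)[of u] pu assms by simp
  then have "g u \<noteq> 0" by auto
  then show ?thesis using cx(1) by blast
qed

lemma complex_hb:
  assumes S: "0 \<in> S" "\<And>x y. x\<in>S \<Longrightarrow> y\<in>S \<Longrightarrow> x+y\<in>S" "\<And>c x. x\<in>S \<Longrightarrow> sc c x\<in>S"
    and w: "\<And>x y. x\<in>S \<Longrightarrow> y\<in>S \<Longrightarrow> w (x+y) = w x + w y" "\<And>c x. x\<in>S \<Longrightarrow> w (sc c x) = cnj c * w x"
    and b: "\<And>x. x\<in>S \<Longrightarrow> cmod (w x) \<le> K * norm x"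
  shows "\<exists>g\<in>cdual sc. \<forall>x\<in>S. g x = w x"
proof -
  define G0 where "G0 = {(x, Re (w x)) | x. x \<in> S}"
  have w0: "w 0 = 0" using w(1)[OF S(1) S(1)] by simp
  have sR: "c *\<^sub>R x \<in> S" if "x \<in> S" for c x using S(3)[OF that, of "complex_of_real c"] sc_real by simp
  have wR: "w (c *\<^sub>R x) = complex_of_real c * w x" if "x \<in> S" for c x
    using w(2)[OF that, of "complex_of_real c"] sc_real by simp
  have "rsub G0" unfolding rsub_def G0_def
  proof (intro conjI allI impI)
    show "(0,0) \<in> {(x, Re (w x)) | x. x \<in> S}" using S(1) w0 by force
  next
    fix x r y s assume "(x,r) \<in> {(x, Re (w x)) | x. x \<in> S}" "(y,s) \<in> {(x, Re (w x)) | x. x \<in> S}"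
    then show "(x+y, r+s) \<in> {(x, Re (w x)) | x. x \<in> S}" using S(2) w(1) by force
  next
    fix x r c assume "(x,r) \<in> {(x, Re (w x)) | x. x \<in> S}"
    then show "(c *\<^sub>R x, c*r) \<in> {(x, Re (w x)) | x. x \<in> S}" using sR wR by force
  qed
  moreover have "rbnd (max K 0) G0" unfolding rbnd_def G0_def
  proof (intro allI impI)
    fix x r assume "(x,r) \<in> {(x, Re (w x)) | x. x \<in> S}"
    then have "x \<in> S" "r = Re (w x)" by auto
    moreover have "K * norm x \<le> max K 0 * norm x" by (rule mult_right_mono) auto
    ultimately show "r \<le> max K 0 * norm x" using b[of x] complex_Re_le_cmod[of "w x"] by linarith
  qed
  ultimately have "\<exists>\<phi>. (\<forall>x y. \<phi> (x+y) = \<phi> x + \<phi> y) \<and> (\<forall>c x. \<phi> (c *\<^sub>R x) = c * \<phi> x) \<and>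
             (\<forall>x r. (x,r)\<in>G0 \<longrightarrow> \<phi> x = r) \<and> (\<forall>x. \<phi> x \<le> max K 0 * norm x)"
    by (rule hb_real) simp
  then obtain \<phi> where p0: "\<forall>x y. \<phi> (x+y) = \<phi> x + \<phi> y" "\<forall>c x. \<phi> (c *\<^sub>R x) = c * \<phi> x"
    "\<forall>x r. (x,r)\<in>G0 \<longrightarrow> \<phi> x = r" "\<forall>x. \<phi> x \<le> max K 0 * norm x" by blast
  have p: "\<And>x y. \<phi> (x+y) = \<phi> x + \<phi> y" "\<And>c x. \<phi> (c *\<^sub>R x) = c * \<phi> x"
    "\<And>x r. (x,r)\<in>G0 \<Longrightarrow> \<phi> x = r" "\<And>x. \<phi> x \<le> max K 0 * norm x" using p0 by blast+
  define g where "g = (\<lambda>x. complex_of_real (\<phi> x) + \<i> * complex_of_real (\<phi> (sc \<i> x)))"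
  note cx = complexify[OF p(1,2,4) g_def]
  have "g x = w x" if x: "x \<in> S" for x
  proof -
    have "\<phi> x = Re (w x)" using p(3) x unfolding G0_def by blast
    moreover have "\<phi> (sc \<i> x) = Re (w (sc \<i> x))" using p(3) S(3)[OF x] unfolding G0_def by blast
    moreover have "Re (w (sc \<i> x)) = Im (w x)" using w(2)[OF x, of \<i>] by simp
    ultimately show ?thesis using cx(2)[of x] cx(3)[of x] by (simp add: complex_eq_iff)
  qed
  then show ?thesis using cx(1) by blast
qed

end



locale fr = csc sc for sc :: "complex \<Rightarrow> 'a::banach \<Rightarrow> 'a" +
  fixes D :: "'a set" and a :: "'a \<Rightarrow> 'a \<Rightarrow> complex" and \<gamma> :: real
  assumes dop: "dual_operator sc D a" and dense: "densely_defined D"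
    and gpos: "\<gamma> > 0" and lb: "lower_bound D a \<gamma>"
begin

lemma D0: "0 \<in> D" using dop unfolding dual_operator_def by blast
lemma Dadd: "x \<in> D \<Longrightarrow> y \<in> D \<Longrightarrow> x + y \<in> D" using dop unfolding dual_operator_def by blast
lemma Dsc: "x \<in> D \<Longrightarrow> sc c x \<in> D" using dop unfolding dual_operator_def by blast
lemma DscaleR: "x \<in> D \<Longrightarrow> r *\<^sub>R x \<in> D" using Dsc[of x "complex_of_real r"] sc_real by simp
lemma Dminus: "x \<in> D \<Longrightarrow> - x \<in> D" using DscaleR[of x "-1"] by simp
lemma Ddiff: "x \<in> D \<Longrightarrow> y \<in> D \<Longrightarrow> x - y \<in> D" using Dadd[of x "-y"] Dminus[of y] by simp

lemma a_add: "x \<in> D \<Longrightarrow> y \<in> D \<Longrightarrow> a (x + y) w = a x w + a y w"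
proof -
  assume "x \<in> D" "y \<in> D"
  then have "a (x + y) = (\<lambda>z. a x z + a y z)" using dop unfolding dual_operator_def by blast
  then show ?thesis by simp
qed
lemma a_sc: "x \<in> D \<Longrightarrow> a (sc c x) w = c * a x w"
proof -
  assume "x \<in> D"
  then have "a (sc c x) = (\<lambda>z. c * a x z)" using dop unfolding dual_operator_def by blast
  then show ?thesis by simp
qed
lemma a_cd: "x \<in> D \<Longrightarrow> a x \<in> cdual sc" using dop unfolding dual_operator_def by blast
lemma a_scaleR: "x \<in> D \<Longrightarrow> a (r *\<^sub>R x) w = complex_of_real r * a x w"
  using a_sc[of x "complex_of_real r" w] sc_real by simp
lemma a_minus: "x \<in> D \<Longrightarrow> a (- x) w = - a x w" using a_scaleR[of x "-1" w] by simp
lemma a_diff: "x \<in> D \<Longrightarrow> y \<in> D \<Longrightarrow> a (x - y) w = a x w - a y w"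
  using a_add[of x "-y" w] a_minus[of y w] Dminus[of y] by simp
lemma a2_add: "x \<in> D \<Longrightarrow> a x (v + w) = a x v + a x w" using cdualD(1)[OF a_cd] by blast
lemma a2_sc: "x \<in> D \<Longrightarrow> a x (sc c w) = cnj c * a x w" using cdualD(2)[OF a_cd] by blast
lemma a2_scaleR: "x \<in> D \<Longrightarrow> a x (r *\<^sub>R w) = complex_of_real r * a x w" using cdual_scaleR[OF a_cd] by blast

definition q where "q x = Re (a x x)"

lemma aq: "x \<in> D \<Longrightarrow> a x x = complex_of_real (q x)"
  using lb unfolding lower_bound_def q_def by (simp add: complex_eq_iff)
lemma qlb: "x \<in> D \<Longrightarrow> \<gamma> * (norm x)\<^sup>2 \<le> q x"
  using lb unfolding lower_bound_def q_def by blast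
lemma qnn: "x \<in> D \<Longrightarrow> 0 \<le> q x"
  using qlb[of x] gpos by (smt (verit) mult_nonneg_nonneg zero_le_power2)
lemma qpos: "x \<in> D \<Longrightarrow> x \<noteq> 0 \<Longrightarrow> 0 < q x"
  using qlb[of x] gpos by (smt (verit) mult_pos_pos zero_less_norm_iff zero_less_power)

lemma herm: "x \<in> D \<Longrightarrow> y \<in> D \<Longrightarrow> a x y = cnj (a y x)"
proof -
  assume x: "x \<in> D" and y: "y \<in> D"
  have gen: "Im (a u v + a v u) = 0" if u: "u \<in> D" and v: "v \<in> D" for u v
  proof -
    have "a (u+v) (u+v) = a u u + a u v + (a v u + a v v)"
      using a_add[OF u v] a2_add[OF u] a2_add[OF v] by simp
    moreover have "Im (a (u+v) (u+v)) = 0" "Im (a u u) = 0" "Im (a v v) = 0"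
      using aq[OF Dadd[OF u v]] aq[OF u] aq[OF v] by simp_all
    ultimately show ?thesis by simp
  qed
  have y': "sc \<i> y \<in> D" using Dsc[OF y] .
  have h1: "Im (a x y + a y x) = 0" by (rule gen[OF x y])
  have "Im (a x (sc \<i> y) + a (sc \<i> y) x) = 0" by (rule gen[OF x y'])
  then have h2: "Re (a y x) - Re (a x y) = 0" using a2_sc[OF x, of \<i> y] a_sc[OF y, of \<i> x] by simp
  show ?thesis using h1 h2 by (simp add: complex_eq_iff)
qed

lemma q_sc: "x \<in> D \<Longrightarrow> q (sc c x) = (cmod c)\<^sup>2 * q x"
proof -
  assume x: "x \<in> D"
  have "a (sc c x) (sc c x) = (c * cnj c) * a x x" using a_sc[OF x] a2_sc[OF x] by simp
  also have "c * cnj c = complex_of_real ((cmod c)\<^sup>2)" by (rule complex_norm_square[symmetric])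
  finally show ?thesis unfolding q_def using aq[OF x] by simp
qed

lemma q_expand: "x \<in> D \<Longrightarrow> w \<in> D \<Longrightarrow> q (x + t *\<^sub>R w) = q x + 2 * t * Re (a x w) + t\<^sup>2 * q w"
proof -
  assume x: "x \<in> D" and w: "w \<in> D"
  have tw: "t *\<^sub>R w \<in> D" using DscaleR[OF w] .
  have "a (x + t *\<^sub>R w) (x + t *\<^sub>R w) = a x x + complex_of_real t * a x w + (complex_of_real t * a w x + complex_of_real t * complex_of_real t * a w w)"
    using a_add[OF x tw] a2_add[OF x] a2_add[OF tw] a_scaleR[OF w] a2_scaleR[OF x] a2_scaleR[OF w]
    by (simp add: algebra_simps)
  moreover have "Re (a w x) = Re (a x w)" using herm[OF w x] by simp
  ultimately show ?thesis unfolding q_def by (simp add: power2_eq_square algebra_simps)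
qed

definition approx where "approx f x e \<longleftrightarrow> x \<in> D \<and> (\<forall>w\<in>D. (cmod (a x w - f w))\<^sup>2 \<le> e * q w)"

lemma quad:
  fixes e R Q :: real
  assumes Q: "Q > 0" and h: "\<And>t. 0 < e + 2*t*R + t\<^sup>2*Q"
  shows "R\<^sup>2 \<le> e*Q"
proof -
  have "0 < e + 2*(-R/Q)*R + (-R/Q)\<^sup>2*Q" by (rule h)
  also have "e + 2*(-R/Q)*R + (-R/Q)\<^sup>2*Q = (e*Q - R\<^sup>2) / Q" using Q
    by (simp add: field_simps power2_eq_square)
  finally show ?thesis using Q by (simp add: zero_less_divide_iff)
qed

lemma exists_approx:
  assumes f: "f \<in> cdual sc" and e: "e > 0"
  shows "\<exists>x. approx f x e"
proof -
  obtain K where K: "K \<ge> 0" "\<And>x. cmod (f x) \<le> K * norm x" using cdual_bound[OF f] by blast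
  define J where "J x = q x - 2 * Re (f x)" for x
  have Jlb: "- (K\<^sup>2/\<gamma>) \<le> J x" if x: "x \<in> D" for x
  proof -
    have "Re (f x) \<le> K * norm x" using K(2)[of x] complex_Re_le_cmod[of "f x"] by linarith
    moreover have "0 \<le> (\<gamma> * norm x - K)\<^sup>2 / \<gamma>" using gpos by simp
    moreover have "(\<gamma> * norm x - K)\<^sup>2 / \<gamma> = \<gamma> * (norm x)\<^sup>2 - 2 * K * norm x + K\<^sup>2/\<gamma>"
      using gpos by (simp add: field_simps power2_eq_square)
    ultimately show ?thesis unfolding J_def using qlb[OF x] by linarith
  qed
  define m where "m = Inf (J ` D)"
  have bdd: "bdd_below (J ` D)" using Jlb unfolding bdd_below_def by blast
  have ne: "J ` D \<noteq> {}" using D0 by blast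
  have mle: "m \<le> J w" if "w \<in> D" for w unfolding m_def using bdd that by (simp add: cInf_lower)
  have "m < m + e" using e by simp
  then obtain x where x: "x \<in> D" "J x < m + e" unfolding m_def using cInf_less_iff[OF ne bdd] by blast
  have Jexp: "J (x + t *\<^sub>R w) = J x + 2 * t * Re (a x w - f w) + t\<^sup>2 * q w" if w: "w \<in> D" for w t
  proof -
    have "f (x + t *\<^sub>R w) = f x + complex_of_real t * f w" using cdualD(1)[OF f] cdual_scaleR[OF f] by simp
    then show ?thesis unfolding J_def using q_expand[OF x(1) w, of t] by (simp add: algebra_simps)
  qed
  have "(cmod (a x w - f w))\<^sup>2 \<le> e * q w" if w: "w \<in> D" for w
  proof (cases "a x w - f w = 0")
    case True then show ?thesis using qnn[OF w] e by simp
  next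
    case False
    define r where "r = a x w - f w"
    define c where "c = r / complex_of_real (cmod r)"
    have r0: "cmod r \<noteq> 0" using False unfolding r_def by simp
    have cm: "cmod c = 1" using r0 unfolding c_def by (simp add: norm_divide)
    define w' where "w' = sc c w"
    have w': "w' \<in> D" unfolding w'_def using Dsc[OF w] .
    have "w \<noteq> 0" using False cdual_zero[OF f] cdual_zero[OF a_cd[OF x(1)]] by auto
    then have qw: "q w > 0" using qpos[OF w] by simp
    have qw': "q w' = q w" unfolding w'_def using q_sc[OF w] cm by simp
    have "a x w' - f w' = cnj c * r" unfolding w'_def r_def using a2_sc[OF x(1)] cdualD(2)[OF f]
      by (simp add: algebra_simps)
    also have "cnj c * r = cnj r * r / complex_of_real (cmod r)" unfolding c_def by simp
    also have "\<dots> = complex_of_real ((cmod r)\<^sup>2) / complex_of_real (cmod r)"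
      by (subst mult.commute, subst complex_norm_square[symmetric]) simp
    also have "\<dots> = complex_of_real (cmod r)" using r0 by (simp add: power2_eq_square)
    finally have rr: "Re (a x w' - f w') = cmod r" by simp
    have "0 < e + 2*t*(cmod r) + t\<^sup>2 * q w" for t
    proof -
      have "m \<le> J (x + t *\<^sub>R w')" by (rule mle, rule Dadd[OF x(1) DscaleR[OF w']])
      then show ?thesis using Jexp[OF w', of t] rr qw' x(2) by simp
    qed
    from quad[OF qw this] show ?thesis unfolding r_def .
  qed
  then show ?thesis unfolding approx_def using x(1) by blast
qed

lemma sq_sum_le: "(cmod (u + v))\<^sup>2 \<le> 2 * ((cmod u)\<^sup>2 + (cmod v)\<^sup>2)"
proof -
  have "cmod (u + v) \<le> cmod u + cmod v" by (rule norm_triangle_ineq)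
  then have "(cmod (u + v))\<^sup>2 \<le> (cmod u + cmod v)\<^sup>2" by (simp add: power_mono)
  also have "\<dots> \<le> 2 * ((cmod u)\<^sup>2 + (cmod v)\<^sup>2)"
    using sum_squares_ge_zero[of "cmod u - cmod v" 0] by (simp add: power2_eq_square algebra_simps)
  finally show ?thesis .
qed

lemma two_add_mono: "(A::real) \<le> X \<Longrightarrow> B \<le> Y \<Longrightarrow> 2 * (A + B) \<le> 2 * (X + Y)" by simp

lemma sq_le_imp: "(x::real)\<^sup>2 \<le> b * x \<Longrightarrow> 0 \<le> x \<Longrightarrow> 0 \<le> b \<Longrightarrow> x \<le> b"
  by (cases "x = 0") (auto simp: power2_eq_square)

lemma approx_close:
  assumes x: "approx f x e" and z: "approx f z d" and e: "0 \<le> e" and d: "0 \<le> d"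
  shows "\<gamma> * (norm (x - z))\<^sup>2 \<le> 2 * (e + d)"
proof -
  have xD: "x \<in> D" and zD: "z \<in> D" using x z unfolding approx_def by auto
  define w where "w = x - z"
  have wD: "w \<in> D" unfolding w_def using Ddiff[OF xD zD] .
  have r1: "(cmod (a x w - f w))\<^sup>2 \<le> e * q w" using x wD unfolding approx_def by blast
  have r2: "(cmod (a z w - f w))\<^sup>2 \<le> d * q w" using z wD unfolding approx_def by blast
  have "a w w = (a x w - f w) - (a z w - f w)" unfolding w_def using a_diff[OF xD zD] by simp
  then have eq: "complex_of_real (q w) = (a x w - f w) + (- (a z w - f w))" using aq[OF wD] by simp
  have "(q w)\<^sup>2 = (cmod (complex_of_real (q w)))\<^sup>2" by simp
  also have "\<dots> = (cmod ((a x w - f w) + (- (a z w - f w))))\<^sup>2" by (simp only: eq)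
  also have "\<dots> \<le> 2 * ((cmod (a x w - f w))\<^sup>2 + (cmod (- (a z w - f w)))\<^sup>2)" by (rule sq_sum_le)
  also have "\<dots> = 2 * ((cmod (a x w - f w))\<^sup>2 + (cmod (a z w - f w))\<^sup>2)" by (simp only: norm_minus_cancel)
  also have "\<dots> \<le> 2 * (e * q w + d * q w)" using r1 r2 by (rule two_add_mono)
  also have "\<dots> = 2 * (e + d) * q w" by (simp add: algebra_simps)
  finally have "q w \<le> 2 * (e + d)" using sq_le_imp qnn[OF wD] e d by simp
  then show ?thesis using qlb[OF wD] unfolding w_def by linarith
qed

lemma approx_add:
  assumes x: "approx f x e" and z: "approx g z d"
  shows "approx (\<lambda>w. f w + g w) (x + z) (2 * (e + d))"
  unfolding approx_def
proof (intro conjI ballI)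
  have xD: "x \<in> D" and zD: "z \<in> D" using x z unfolding approx_def by auto
  show "x + z \<in> D" using Dadd[OF xD zD] .
  fix w assume wD: "w \<in> D"
  have r1: "(cmod (a x w - f w))\<^sup>2 \<le> e * q w" using x wD unfolding approx_def by blast
  have r2: "(cmod (a z w - g w))\<^sup>2 \<le> d * q w" using z wD unfolding approx_def by blast
  have eq: "a (x + z) w - (f w + g w) = (a x w - f w) + (a z w - g w)" using a_add[OF xD zD] by simp
  have "(cmod (a (x + z) w - (f w + g w)))\<^sup>2 \<le> 2 * ((cmod (a x w - f w))\<^sup>2 + (cmod (a z w - g w))\<^sup>2)"
    unfolding eq by (rule sq_sum_le)
  also have "\<dots> \<le> 2 * (e * q w + d * q w)" using r1 r2 by (rule two_add_mono)
  also have "\<dots> = 2 * (e + d) * q w" by (simp add: algebra_simps)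
  finally show "(cmod (a (x + z) w - (f w + g w)))\<^sup>2 \<le> 2 * (e + d) * q w" .
qed

lemma approx_smult:
  assumes x: "approx f x e"
  shows "approx (\<lambda>w. c * f w) (sc c x) ((cmod c)\<^sup>2 * e)"
  unfolding approx_def
proof (intro conjI ballI)
  have xD: "x \<in> D" using x unfolding approx_def by auto
  show "sc c x \<in> D" using Dsc[OF xD] .
  fix w assume wD: "w \<in> D"
  have r1: "(cmod (a x w - f w))\<^sup>2 \<le> e * q w" using x wD unfolding approx_def by blast
  have "a (sc c x) w - c * f w = c * (a x w - f w)" using a_sc[OF xD] by (simp add: algebra_simps)
  then have "(cmod (a (sc c x) w - c * f w))\<^sup>2 = (cmod c)\<^sup>2 * (cmod (a x w - f w))\<^sup>2"
    by (simp add: norm_mult power_mult_distrib)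
  also have "\<dots> \<le> (cmod c)\<^sup>2 * (e * q w)" using r1 by (simp add: mult_left_mono)
  finally show "(cmod (a (sc c x) w - c * f w))\<^sup>2 \<le> (cmod c)\<^sup>2 * e * q w" by (simp add: mult.assoc)
qed

lemma approx_self: "x \<in> D \<Longrightarrow> approx (a x) x 0"
  unfolding approx_def by simp

lemma approx_qbound:
  assumes f: "f \<in> cdual sc" and K: "K \<ge> 0" "\<And>x. cmod (f x) \<le> K * norm x"
    and x: "approx f x e" and e: "0 \<le> e" "e \<le> 1"
  shows "q x \<le> 2 * (K\<^sup>2 / \<gamma> + 1)"
proof -
  have xD: "x \<in> D" using x unfolding approx_def by auto
  have r: "(cmod (a x x - f x))\<^sup>2 \<le> e * q x" using x xD unfolding approx_def by blast
  have qx: "0 \<le> q x" using qnn[OF xD] .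
  have "(norm x)\<^sup>2 \<le> q x / \<gamma>" using qlb[OF xD] by (simp add: pos_le_divide_eq[OF gpos] mult.commute)
  have "(cmod (f x))\<^sup>2 \<le> (K * norm x)\<^sup>2" using K(2)[of x] by (simp add: power_mono)
  also have "\<dots> = K\<^sup>2 * (norm x)\<^sup>2" by (simp add: power_mult_distrib)
  also have "\<dots> \<le> K\<^sup>2 * (q x / \<gamma>)" by (rule mult_left_mono[OF \<open>(norm x)\<^sup>2 \<le> q x / \<gamma>\<close> zero_le_power2])
  finally have fx: "(cmod (f x))\<^sup>2 \<le> K\<^sup>2 / \<gamma> * q x" by simp
  have eq: "complex_of_real (q x) = f x + (a x x - f x)" using aq[OF xD] by simp
  have "(q x)\<^sup>2 = (cmod (complex_of_real (q x)))\<^sup>2" by simp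
  also have "\<dots> = (cmod (f x + (a x x - f x)))\<^sup>2" by (simp only: eq)
  also have "\<dots> \<le> 2 * ((cmod (f x))\<^sup>2 + (cmod (a x x - f x))\<^sup>2)" by (rule sq_sum_le)
  also have "\<dots> \<le> 2 * (K\<^sup>2 / \<gamma> * q x + 1 * q x)"
    using fx order.trans[OF r mult_right_mono[OF e(2) qx]] by (rule two_add_mono)
  also have "\<dots> = 2 * (K\<^sup>2 / \<gamma> + 1) * q x" by (simp add: algebra_simps)
  finally show ?thesis using sq_le_imp qx gpos by (simp add: zero_le_divide_iff)
qed

definition E :: "nat \<Rightarrow> real" where "E n = inverse (real (Suc n))"
lemma E_pos: "0 < E n" unfolding E_def by simp
lemma E_le1: "E n \<le> 1" unfolding E_def by (simp add: inverse_le_1_iff)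
lemma E_lim: "E \<longlonglongrightarrow> 0" unfolding E_def using LIMSEQ_inverse_real_of_nat .

definition Y where "Y f n = (SOME x. approx f x (E n))"
lemma Y_approx: "f \<in> cdual sc \<Longrightarrow> approx f (Y f n) (E n)"
  unfolding Y_def using exists_approx[OF _ E_pos] by (rule someI_ex)

lemma approx_cauchy:
  assumes X: "\<And>n. approx f (X n) (e n)" and e: "e \<longlonglongrightarrow> 0" "\<And>n. 0 \<le> e n"
  shows "Cauchy X"
  unfolding Cauchy_def
proof (intro allI impI)
  fix \<epsilon> :: real assume \<epsilon>: "\<epsilon> > 0"
  define \<delta> where "\<delta> = \<gamma> * \<epsilon>\<^sup>2 / 4"
  have \<delta>: "\<delta> > 0" unfolding \<delta>_def using gpos \<epsilon> by simp
  obtain N where N: "\<And>n. n \<ge> N \<Longrightarrow> norm (e n - 0) < \<delta>" using LIMSEQ_D[OF e(1) \<delta>] by blast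
  show "\<exists>M. \<forall>m\<ge>M. \<forall>n\<ge>M. dist (X m) (X n) < \<epsilon>"
  proof (intro exI allI impI)
    fix m n assume m: "m \<ge> N" and n: "n \<ge> N"
    have "e m < \<delta>" "e n < \<delta>" using N[OF m] N[OF n] e(2)[of m] e(2)[of n] by auto
    moreover have "4 * \<delta> = \<gamma> * \<epsilon>\<^sup>2" unfolding \<delta>_def by simp
    ultimately have h2: "2 * (e m + e n) < \<gamma> * \<epsilon>\<^sup>2" by (smt (verit))
    have h1: "\<gamma> * (norm (X m - X n))\<^sup>2 \<le> 2 * (e m + e n)" by (rule approx_close[OF X[of m] X[of n] e(2) e(2)])
    from h1 h2 have "\<gamma> * (norm (X m - X n))\<^sup>2 < \<gamma> * \<epsilon>\<^sup>2" by (rule le_less_trans)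
    then have "(norm (X m - X n))\<^sup>2 < \<epsilon>\<^sup>2" using gpos by simp
    then have "norm (X m - X n) < \<epsilon>" using \<epsilon> by (simp add: power_less_imp_less_base)
    then show "dist (X m) (X n) < \<epsilon>" by (simp add: dist_norm)
  qed
qed

definition B where "B f = lim (Y f)"

lemma B_lim: "f \<in> cdual sc \<Longrightarrow> Y f \<longlonglongrightarrow> B f"
  unfolding B_def
  using approx_cauchy[of f "Y f" E, OF Y_approx E_lim] E_pos
  by (simp add: less_imp_le Cauchy_convergent flip: convergent_LIMSEQ_iff)

lemma approx_lim:
  assumes f: "f \<in> cdual sc" and X: "\<And>n. approx f (X n) (e n)" and e: "e \<longlonglongrightarrow> 0" "\<And>n. 0 \<le> e n"
  shows "X \<longlonglongrightarrow> B f"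
proof -
  have b: "norm (X n - Y f n) \<le> sqrt (2 * (e n + E n) / \<gamma>)" for n
  proof -
    have "\<gamma> * (norm (X n - Y f n))\<^sup>2 \<le> 2 * (e n + E n)"
      using approx_close[OF X Y_approx[OF f] e(2) less_imp_le[OF E_pos]] .
    then have "(norm (X n - Y f n))\<^sup>2 \<le> 2 * (e n + E n) / \<gamma>" by (simp add: pos_le_divide_eq[OF gpos] mult.commute)
    then show ?thesis by (simp add: real_le_rsqrt)
  qed
  have "(\<lambda>n. sqrt (2 * (e n + E n) / \<gamma>)) \<longlonglongrightarrow> sqrt (2 * (0 + 0) / \<gamma>)"
    by (intro tendsto_intros e(1) E_lim) (use gpos in auto)
  then have t0: "(\<lambda>n. sqrt (2 * (e n + E n) / \<gamma>)) \<longlonglongrightarrow> 0" by simp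
  have "(\<lambda>n. X n - Y f n) \<longlonglongrightarrow> 0"
    by (rule Lim_null_comparison[OF _ t0]) (intro always_eventually allI b)
  then have "(\<lambda>n. (X n - Y f n) + Y f n) \<longlonglongrightarrow> 0 + B f" using B_lim[OF f] by (rule tendsto_add)
  then show ?thesis by simp
qed

lemma sc_bl: "bounded_linear (sc c)"
proof (rule bounded_linear_intro[of _ "cmod c"])
  show "sc c (x + y) = sc c x + sc c y" for x y by (rule sc_add_r)
  show "sc c (r *\<^sub>R x) = r *\<^sub>R sc c x" for r x by (rule sc_scaleR)
  show "norm (sc c x) \<le> norm x * cmod c" for x by (simp add: sc_norm mult.commute)
qed

lemma B_add: "f \<in> cdual sc \<Longrightarrow> g \<in> cdual sc \<Longrightarrow> B (\<lambda>w. f w + g w) = B f + B g"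
proof -
  assume f: "f \<in> cdual sc" and g: "g \<in> cdual sc"
  have "(\<lambda>n. Y f n + Y g n) \<longlonglongrightarrow> B (\<lambda>w. f w + g w)"
  proof (rule approx_lim[OF cdual_add[OF f g]])
    show "approx (\<lambda>w. f w + g w) (Y f n + Y g n) (2 * (E n + E n))" for n
      by (rule approx_add[OF Y_approx[OF f] Y_approx[OF g]])
    show "(\<lambda>n. 2 * (E n + E n)) \<longlonglongrightarrow> 0" using tendsto_mult[OF tendsto_const[of 2] tendsto_add[OF E_lim E_lim]] by simp
    show "0 \<le> 2 * (E n + E n)" for n using E_pos[of n] by simp
  qed
  moreover have "(\<lambda>n. Y f n + Y g n) \<longlonglongrightarrow> B f + B g" by (intro tendsto_add B_lim f g)
  ultimately show ?thesis using LIMSEQ_unique by blast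
qed

lemma B_smult: "f \<in> cdual sc \<Longrightarrow> B (\<lambda>w. c * f w) = sc c (B f)"
proof -
  assume f: "f \<in> cdual sc"
  have "(\<lambda>n. sc c (Y f n)) \<longlonglongrightarrow> B (\<lambda>w. c * f w)"
  proof (rule approx_lim[OF cdual_smult[OF f]])
    show "approx (\<lambda>w. c * f w) (sc c (Y f n)) ((cmod c)\<^sup>2 * E n)" for n
      by (rule approx_smult[OF Y_approx[OF f]])
    show "(\<lambda>n. (cmod c)\<^sup>2 * E n) \<longlonglongrightarrow> 0" using tendsto_mult[OF tendsto_const[of "(cmod c)\<^sup>2"] E_lim] by simp
    show "0 \<le> (cmod c)\<^sup>2 * E n" for n using E_pos[of n] by simp
  qed
  moreover have "(\<lambda>n. sc c (Y f n)) \<longlonglongrightarrow> sc c (B f)"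
    using bounded_linear.tendsto[OF sc_bl B_lim[OF f]] .
  ultimately show ?thesis using LIMSEQ_unique by blast
qed

lemma B_self: "x \<in> D \<Longrightarrow> B (a x) = x"
proof -
  assume x: "x \<in> D"
  have "(\<lambda>n. x) \<longlonglongrightarrow> B (a x)"
    by (rule approx_lim[OF a_cd[OF x], of "\<lambda>n. x" "\<lambda>n. 0"]) (simp_all add: approx_self[OF x])
  then show ?thesis using LIMSEQ_unique tendsto_const by blast
qed

lemma sq_bound_tendsto:
  fixes U :: "nat \<Rightarrow> complex"
  assumes b: "\<And>n. (cmod (U n))\<^sup>2 \<le> E n * M" and M: "0 \<le> M"
  shows "U \<longlonglongrightarrow> 0"
proof -
  have b': "norm (U n) \<le> sqrt (E n * M)" for n using b[of n] by (simp add: real_le_rsqrt)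
  have "(\<lambda>n. sqrt (E n * M)) \<longlonglongrightarrow> sqrt (0 * M)" by (intro tendsto_intros E_lim)
  then have t0: "(\<lambda>n. sqrt (E n * M)) \<longlonglongrightarrow> 0" by simp
  show ?thesis by (rule Lim_null_comparison[OF _ t0]) (intro always_eventually allI b')
qed

lemma Y_D: "f \<in> cdual sc \<Longrightarrow> Y f n \<in> D" using Y_approx unfolding approx_def by blast

lemma Y_res: "f \<in> cdual sc \<Longrightarrow> w \<in> D \<Longrightarrow> (cmod (a (Y f n) w - f w))\<^sup>2 \<le> E n * q w"
  using Y_approx unfolding approx_def by blast

lemma Y_qbound:
  assumes f: "f \<in> cdual sc"
  obtains M where "0 \<le> M" "\<And>n. q (Y f n) \<le> M"
proof -
  obtain K where K: "K \<ge> 0" "\<And>x. cmod (f x) \<le> K * norm x" using cdual_bound[OF f] by blast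
  have "q (Y f n) \<le> 2 * (K\<^sup>2 / \<gamma> + 1)" for n
    by (rule approx_qbound[OF f K Y_approx[OF f] less_imp_le[OF E_pos] E_le1])
  moreover have "0 \<le> 2 * (K\<^sup>2 / \<gamma> + 1)" using gpos by simp
  ultimately show ?thesis using that by blast
qed

lemma B_zero:
  assumes f: "f \<in> cdual sc" and B0: "B f = 0"
  shows "f x = 0"
proof -
  have onD: "f w = 0" if wD: "w \<in> D" for w
  proof -
    have X: "Y f \<longlonglongrightarrow> 0" using B_lim[OF f] B0 by simp
    have "(\<lambda>n. a w (Y f n)) \<longlonglongrightarrow> a w 0" by (rule cdual_tendsto[OF a_cd[OF wD] X])
    then have "(\<lambda>n. cnj (a w (Y f n))) \<longlonglongrightarrow> cnj (a w 0)" by (rule tendsto_cnj)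
    then have "(\<lambda>n. cnj (a w (Y f n))) \<longlonglongrightarrow> 0" using cdual_zero[OF a_cd[OF wD]] by simp
    moreover have "a (Y f n) w = cnj (a w (Y f n))" for n using herm[OF Y_D[OF f] wD] .
    ultimately have t1: "(\<lambda>n. a (Y f n) w) \<longlonglongrightarrow> 0" by simp
    have t2: "(\<lambda>n. a (Y f n) w - f w) \<longlonglongrightarrow> 0"
      by (rule sq_bound_tendsto[OF Y_res[OF f wD] qnn[OF wD]])
    have "(\<lambda>n. a (Y f n) w - (a (Y f n) w - f w)) \<longlonglongrightarrow> 0 - 0" by (rule tendsto_diff[OF t1 t2])
    then have "(\<lambda>n. f w) \<longlonglongrightarrow> 0" by simp
    then show ?thesis by (simp add: LIMSEQ_const_iff)
  qed
  have "x \<in> closure D" using dense unfolding densely_defined_def by simp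
  then obtain S where S: "\<And>n. S n \<in> D" "S \<longlonglongrightarrow> x" unfolding closure_sequential by blast
  have "(\<lambda>n. f (S n)) \<longlonglongrightarrow> f x" by (rule cdual_tendsto[OF f S(2)])
  moreover have "f (S n) = 0" for n using onD[OF S(1)] .
  ultimately show ?thesis by (simp add: LIMSEQ_const_iff)
qed

lemma B_inj:
  assumes f: "f \<in> cdual sc" and g: "g \<in> cdual sc" and eq: "B f = B g"
  shows "f = g"
proof
  fix x
  define h where "h = (\<lambda>w. f w + (-1) * g w)"
  have h: "h \<in> cdual sc" unfolding h_def by (rule cdual_add[OF f cdual_smult[OF g]])
  have "B h = B f + B (\<lambda>w. (-1) * g w)" unfolding h_def by (rule B_add[OF f cdual_smult[OF g]])
  also have "B (\<lambda>w. (-1) * g w) = sc (-1) (B g)" by (rule B_smult[OF g])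
  also have "sc (-1) (B g) = - B g" using sc_real[of "-1" "B g"] by simp
  finally have "B h = 0" using eq by simp
  then have "h x = 0" by (rule B_zero[OF h])
  then show "f x = g x" unfolding h_def by simp
qed

lemma B_sym:
  assumes f: "f \<in> cdual sc" and g: "g \<in> cdual sc"
  shows "g (B f) = cnj (f (B g))"
proof -
  obtain Mf where Mf: "0 \<le> Mf" "\<And>n. q (Y f n) \<le> Mf" using Y_qbound[OF f] by blast
  obtain Mg where Mg: "0 \<le> Mg" "\<And>n. q (Y g n) \<le> Mg" using Y_qbound[OF g] by blast
  define U where "U n = a (Y g n) (Y f n) - g (Y f n)" for n
  define V where "V n = a (Y f n) (Y g n) - f (Y g n)" for n
  have bU: "(cmod (U n))\<^sup>2 \<le> E n * Mf" for n
  proof -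
    have "(cmod (U n))\<^sup>2 \<le> E n * q (Y f n)" unfolding U_def by (rule Y_res[OF g Y_D[OF f]])
    also have "\<dots> \<le> E n * Mf" by (rule mult_left_mono[OF Mf(2) less_imp_le[OF E_pos]])
    finally show ?thesis .
  qed
  have bV: "(cmod (V n))\<^sup>2 \<le> E n * Mg" for n
  proof -
    have "(cmod (V n))\<^sup>2 \<le> E n * q (Y g n)" unfolding V_def by (rule Y_res[OF f Y_D[OF g]])
    also have "\<dots> \<le> E n * Mg" by (rule mult_left_mono[OF Mg(2) less_imp_le[OF E_pos]])
    finally show ?thesis .
  qed
  have tU: "U \<longlonglongrightarrow> 0" by (rule sq_bound_tendsto[OF bU Mf(1)])
  have tV: "V \<longlonglongrightarrow> 0" by (rule sq_bound_tendsto[OF bV Mg(1)])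
  have eq: "g (Y f n) - cnj (f (Y g n)) = cnj (V n) - U n" for n
    unfolding U_def V_def using herm[OF Y_D[OF g] Y_D[OF f], of n n] by simp
  have "(\<lambda>n. cnj (V n) - U n) \<longlonglongrightarrow> cnj 0 - 0" by (intro tendsto_intros tU tV)
  then have t0: "(\<lambda>n. g (Y f n) - cnj (f (Y g n))) \<longlonglongrightarrow> 0" unfolding eq by simp
  have t1: "(\<lambda>n. g (Y f n) - cnj (f (Y g n))) \<longlonglongrightarrow> g (B f) - cnj (f (B g))"
    by (intro tendsto_intros cdual_tendsto[OF g B_lim[OF f]] cdual_tendsto[OF f B_lim[OF g]])
  from LIMSEQ_unique[OF t1 t0] show ?thesis by simp
qed

lemma B_lb:
  assumes f: "f \<in> cdual sc"
  shows "Im (f (B f)) = 0" "\<gamma> * (norm (B f))\<^sup>2 \<le> Re (f (B f))"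
proof -
  obtain M where M: "0 \<le> M" "\<And>n. q (Y f n) \<le> M" using Y_qbound[OF f] by blast
  define U where "U n = complex_of_real (q (Y f n)) - f (Y f n)" for n
  have bU: "(cmod (U n))\<^sup>2 \<le> E n * M" for n
  proof -
    have "(cmod (U n))\<^sup>2 \<le> E n * q (Y f n)" unfolding U_def
      using Y_res[OF f Y_D[OF f], of n n] aq[OF Y_D[OF f], of n] by simp
    also have "\<dots> \<le> E n * M" by (rule mult_left_mono[OF M(2) less_imp_le[OF E_pos]])
    finally show ?thesis .
  qed
  have tU: "U \<longlonglongrightarrow> 0" by (rule sq_bound_tendsto[OF bU M(1)])
  have "(\<lambda>n. U n + f (Y f n)) \<longlonglongrightarrow> 0 + f (B f)"
    by (intro tendsto_add tU cdual_tendsto[OF f B_lim[OF f]])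
  then have tq: "(\<lambda>n. complex_of_real (q (Y f n))) \<longlonglongrightarrow> f (B f)" unfolding U_def by simp
  have "(\<lambda>n. Im (complex_of_real (q (Y f n)))) \<longlonglongrightarrow> Im (f (B f))" by (rule tendsto_Im[OF tq])
  then show "Im (f (B f)) = 0" by (simp add: LIMSEQ_const_iff)
  have "(\<lambda>n. Re (complex_of_real (q (Y f n)))) \<longlonglongrightarrow> Re (f (B f))" by (rule tendsto_Re[OF tq])
  then have t1: "(\<lambda>n. q (Y f n)) \<longlonglongrightarrow> Re (f (B f))" by simp
  have t2: "(\<lambda>n. \<gamma> * (norm (Y f n))\<^sup>2) \<longlonglongrightarrow> \<gamma> * (norm (B f))\<^sup>2"
    by (intro tendsto_intros B_lim[OF f])
  show "\<gamma> * (norm (B f))\<^sup>2 \<le> Re (f (B f))"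
    by (rule tendsto_le[OF _ t1 t2]) (simp_all add: qlb[OF Y_D[OF f]])
qed

end

theorem theorem2:
  fixes sc :: "complex \<Rightarrow> 'a::banach \<Rightarrow> 'a"
    and D :: "'a set" and a :: "'a \<Rightarrow> 'a \<Rightarrow> complex" and \<gamma> :: real
  assumes "complex_scaling sc"
    and "reflexive_space sc TYPE('a)"
    and "dual_operator sc D a"
    and "densely_defined D"
    and "positive_op D a"
    and "\<gamma> > 0"
    and "lower_bound D a \<gamma>"
  shows "\<exists>D' A. dual_operator sc D' A \<and> densely_defined D' \<and> D \<subseteq> D' \<and> (\<forall>x\<in>D. A x = a x) \<and>
           positive_op D' A \<and> self_adjoint sc D' A \<and> lower_bound D' A \<gamma>"
proof -
  have "fr sc D a \<gamma>" using assms unfolding fr_def fr_axioms_def csc_def by blast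
  then interpret fr sc D a \<gamma> .
  define D' where "D' = B ` cdual sc"
  define A where "A = (\<lambda>y. inv_into (cdual sc) B y)"
  have injB: "inj_on B (cdual sc)" using B_inj unfolding inj_on_def by blast
  have AB: "A (B f) = f" if "f \<in> cdual sc" for f unfolding A_def using injB that by (simp add: inv_into_f_f)
  have D'E: "\<exists>f\<in>cdual sc. y = B f" if "y \<in> D'" for y using that unfolding D'_def by blast
  have BD': "B f \<in> D'" if "f \<in> cdual sc" for f using that unfolding D'_def by blast
  have DD': "D \<subseteq> D'"
  proof
    fix x assume x: "x \<in> D"
    have "B (a x) \<in> D'" by (rule BD'[OF a_cd[OF x]])
    then show "x \<in> D'" using B_self[OF x] by simp
  qed
  have Aa: "\<forall>x\<in>D. A x = a x"
  proof
    fix x assume x: "x \<in> D"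
    have "A (B (a x)) = a x" by (rule AB[OF a_cd[OF x]])
    then show "A x = a x" using B_self[OF x] by simp
  qed
  have Acd: "A y \<in> cdual sc" if "y \<in> D'" for y
    using D'E[OF that] AB by auto
  have dopA: "dual_operator sc D' A"
    unfolding dual_operator_def
  proof (intro conjI ballI allI)
    show "0 \<in> D'" using DD' D0 by blast
  next
    fix x y assume x: "x \<in> D'" and y: "y \<in> D'"
    obtain f where f: "f \<in> cdual sc" "x = B f" using D'E[OF x] by blast
    obtain g where g: "g \<in> cdual sc" "y = B g" using D'E[OF y] by blast
    have xy: "x + y = B (\<lambda>w. f w + g w)" using B_add[OF f(1) g(1)] f g by simp
    show "x + y \<in> D'" unfolding xy by (rule BD'[OF cdual_add[OF f(1) g(1)]])
    show "A (x + y) = (\<lambda>z. A x z + A y z)" unfolding xy using AB[OF cdual_add[OF f(1) g(1)]] AB[OF f(1)] AB[OF g(1)] f g by simp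
  next
    fix c x assume x: "x \<in> D'"
    obtain f where f: "f \<in> cdual sc" "x = B f" using D'E[OF x] by blast
    have cx: "sc c x = B (\<lambda>w. c * f w)" using B_smult[OF f(1)] f by simp
    show "sc c x \<in> D'" unfolding cx by (rule BD'[OF cdual_smult[OF f(1)]])
    show "A (sc c x) = (\<lambda>z. c * A x z)" unfolding cx using AB[OF cdual_smult[OF f(1)]] AB[OF f(1)] f by simp
  next
    fix x assume x: "x \<in> D'"
    show "A x \<in> cdual sc" by (rule Acd[OF x])
  qed
  have dens: "densely_defined D'"
    using dense closure_mono[OF DD'] unfolding densely_defined_def by blast
  have lbA: "lower_bound D' A \<gamma>"
    unfolding lower_bound_def
  proof
    fix y assume y: "y \<in> D'"
    obtain f where f: "f \<in> cdual sc" "y = B f" using D'E[OF y] by blast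
    show "Im (A y y) = 0 \<and> \<gamma> * (norm y)\<^sup>2 \<le> Re (A y y)"
      using B_lb[OF f(1)] AB[OF f(1)] f(2) by simp
  qed
  have posA: "positive_op D' A"
    unfolding positive_op_def
  proof
    fix y assume y: "y \<in> D'"
    have "Im (A y y) = 0" "\<gamma> * (norm y)\<^sup>2 \<le> Re (A y y)" using lbA y unfolding lower_bound_def by auto
    moreover have "0 \<le> \<gamma> * (norm y)\<^sup>2" using gpos by simp
    ultimately show "Im (A y y) = 0 \<and> 0 \<le> Re (A y y)" by linarith
  qed
  have symA: "A x y = cnj (A y x)" if x: "x \<in> D'" and y: "y \<in> D'" for x y
  proof -
    obtain f where f: "f \<in> cdual sc" "y = B f" using D'E[OF y] by blast
    obtain g where g: "g \<in> cdual sc" "x = B g" using D'E[OF x] by blast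
    show ?thesis using B_sym[OF f(1) g(1)] AB[OF f(1)] AB[OF g(1)] f(2) g(2) by simp
  qed
  have adj: "adj_dom D' A = D'"
  proof
    show "D' \<subseteq> adj_dom D' A"
    proof
      fix y assume y: "y \<in> D'"
      obtain f where f: "f \<in> cdual sc" "y = B f" using D'E[OF y] by blast
      obtain K where K: "\<And>x. cmod (f x) \<le> K * norm x" using cdual_bound[OF f(1)] by blast
      have "cmod (A x y) \<le> K * norm x" if x: "x \<in> D'" for x
      proof -
        have "A x y = cnj (A y x)" by (rule symA[OF x y])
        moreover have "A y x = f x" using AB[OF f(1)] f(2) by simp
        ultimately show ?thesis using K[of x] by simp
      qed
      then show "y \<in> adj_dom D' A" unfolding adj_dom_def by blast
    qed
  next
    show "adj_dom D' A \<subseteq> D'"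
    proof
      fix y assume "y \<in> adj_dom D' A"
      then obtain K where K: "\<And>x. x \<in> D' \<Longrightarrow> cmod (A x y) \<le> K * norm x" unfolding adj_dom_def by blast
      have S: "0 \<in> D'" "\<And>x z. x \<in> D' \<Longrightarrow> z \<in> D' \<Longrightarrow> x + z \<in> D'" "\<And>c x. x \<in> D' \<Longrightarrow> sc c x \<in> D'"
        using dopA unfolding dual_operator_def by blast+
      have Aadd: "A (x + z) = (\<lambda>u. A x u + A z u)" if "x \<in> D'" "z \<in> D'" for x z
        using dopA that unfolding dual_operator_def by blast
      have Asc: "A (sc c x) = (\<lambda>u. c * A x u)" if "x \<in> D'" for c x
        using dopA that unfolding dual_operator_def by blast
      have "\<exists>h\<in>cdual sc. \<forall>x\<in>D'. h x = cnj (A x y)"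
      proof (rule complex_hb[OF S])
        show "cnj (A (x + z) y) = cnj (A x y) + cnj (A z y)" if "x \<in> D'" "z \<in> D'" for x z
          using Aadd[OF that] by simp
        show "cnj (A (sc c x) y) = cnj c * cnj (A x y)" if "x \<in> D'" for c x
          using Asc[OF that] by simp
        show "cmod (cnj (A x y)) \<le> K * norm x" if "x \<in> D'" for x using K[OF that] by simp
      qed
      then obtain h where h: "h \<in> cdual sc" "\<And>x. x \<in> D' \<Longrightarrow> h x = cnj (A x y)" by blast
      define z where "z = B h"
      have zD: "z \<in> D'" unfolding z_def by (rule BD'[OF h(1)])
      have "g (y - z) = 0" if g: "g \<in> cdual sc" for g
      proof -
        have "g z = cnj (h (B g))" unfolding z_def by (rule B_sym[OF h(1) g])
        also have "h (B g) = cnj (A (B g) y)" by (rule h(2)[OF BD'[OF g]])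
        also have "A (B g) = g" by (rule AB[OF g])
        finally have "g z = g y" by simp
        then show ?thesis using cdual_diff[OF g] by simp
      qed
      then have "y - z = 0" using separation by blast
      then show "y \<in> D'" using zD by simp
    qed
  qed
  have saA: "self_adjoint sc D' A"
    unfolding self_adjoint_def is_adjoint_value_def
  proof (intro conjI ballI adj)
    fix y assume y: "y \<in> D'"
    show "A y \<in> cdual sc" by (rule Acd[OF y])
    fix x assume x: "x \<in> D'"
    have "A x y = cnj (A y x)" by (rule symA[OF x y])
    then show "cnj (A y x) = A x y" by (rule sym)
  qed
  show ?thesis
    by (rule exI[of _ D'], rule exI[of _ A]) (intro conjI dopA dens DD' Aa posA saA lbA)
qed


end
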